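(* Let $W$ be a skew-symmetric weighing matrix of order $n\equiv 0\pmod 4$ and weight $m\equiv 3\pmod 8$, i.e. an $n\times n$ matrix with entries in $\{0,1,-1\}$ satisfying $W^T=-W$ and $WW^T=mI$. Let $\tilde{C}_4(W)$ be the $\mathbb{Z}_4$-code of length $2n$ with generator matrix $(I\ \ W+2I)$, entries read modulo $4$. Let $a,b,c,d$ be integers with $c\equiv 2a+b\pmod 4$ and $d\equiv a+2b\pmod 4$. Then $\tilde{C}_4(W)$ is a Type~II $\mathbb{Z}_4$-code, $A_4(\tilde{C}_4(W))$ is an even unimodular lattice, and the $2n$ rows of the matrix \[ \tilde{F}(W)=\frac{1}{2}\begin{pmatrix} aI+bW & cI+dW\\ -cI+dW & aI-bW\end{pmatrix} \] form a $\frac{1}{4}(a^2+mb^2+c^2+md^2)$-frame of $A_4(\tilde{C}_4(W))$.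
   Context: A $\mathbb{Z}_k$-code of length $N$ is a $\mathbb{Z}_k$-submodule of $\mathbb{Z}_k^N$. A Type~II $\mathbb{Z}_4$-code is a self-dual $\mathbb{Z}_4$-code (equal to its dual under the standard inner product) all of whose codewords have Euclidean weight divisible by $8$, where the Euclidean weight of $x$ is $n_1(x)+4n_2(x)$, with $n_1(x)$ the number of coordinates equal to $\pm1$ and $n_2(x)$ the number equal to $2$. Construction A: with $\rho:\mathbb{Z}_k\to\mathbb{Z}$ sending $0,1,\dots,k-1$ to $0,1,\dots,k-1$, for a $\mathbb{Z}_k$-code $C$ of length $N$ set $A_k(C)=\frac{1}{\sqrt{k}}\{\rho(C)+k\mathbb{Z}^N\}$. For a lattice $L$ in dimension $N$, a set $\{f_1,\dots,f_N\}$ of vectors of $L$ with $(f_i,f_j)=t\,\delta_{i,j}$ is called a $t$-frame of $L$. A lattice $L$ is even unimodular if it equals its dual and all norms $(x,x)$, $x\in L$, are even. *)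

theory Defs
  imports Complex_Main "Jordan_Normal_Form.Matrix"
begin

text \<open>Elements of Z_k are represented by their integer representatives 0,...,k-1,
 so the map rho of Construction A is simply the inclusion of integers into reals.\<close>

definition Zk_space :: "int \<Rightarrow> nat \<Rightarrow> int vec set" where
  "Zk_space k N = {x \<in> carrier_vec N. \<forall>i<N. 0 \<le> x $ i \<and> x $ i < k}"

definition is_Zk_code :: "int \<Rightarrow> nat \<Rightarrow> int vec set \<Rightarrow> bool" where
  "is_Zk_code k N C \<longleftrightarrow> C \<subseteq> Zk_space k N \<and> 0\<^sub>v N \<in> C
     \<and> (\<forall>x\<in>C. \<forall>y\<in>C. map_vec (\<lambda>t. t mod k) (x + y) \<in> C)
     \<and> (\<forall>x\<in>C. \<forall>r::int. map_vec (\<lambda>t. (r * t) mod k) x \<in> C)"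

definition dual_code :: "int \<Rightarrow> nat \<Rightarrow> int vec set \<Rightarrow> int vec set" where
  "dual_code k N C = {x \<in> Zk_space k N. \<forall>y\<in>C. (x \<bullet> y) mod k = 0}"

definition euclid_weight :: "int vec \<Rightarrow> nat" where
  "euclid_weight x = card {i. i < dim_vec x \<and> (x $ i = 1 \<or> x $ i = 3)}
                     + 4 * card {i. i < dim_vec x \<and> x $ i = 2}"

definition type_II_Z4 :: "nat \<Rightarrow> int vec set \<Rightarrow> bool" where
  "type_II_Z4 N C \<longleftrightarrow> is_Zk_code 4 N C \<and> C = dual_code 4 N C
     \<and> (\<forall>x\<in>C. 8 dvd euclid_weight x)"

definition constrA :: "int \<Rightarrow> nat \<Rightarrow> int vec set \<Rightarrow> real vec set" where
  "constrA k N C = {(1 / sqrt (real_of_int k)) \<cdot>\<^sub>v map_vec real_of_int (c + k \<cdot>\<^sub>v z)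
                    | c z. c \<in> C \<and> z \<in> carrier_vec N}"

definition dual_lattice :: "nat \<Rightarrow> real vec set \<Rightarrow> real vec set" where
  "dual_lattice N L = {y \<in> carrier_vec N. \<forall>x\<in>L. y \<bullet> x \<in> \<int>}"

definition even_unimodular :: "nat \<Rightarrow> real vec set \<Rightarrow> bool" where
  "even_unimodular N L \<longleftrightarrow> L = dual_lattice N L
     \<and> (\<forall>x\<in>L. \<exists>j::int. x \<bullet> x = 2 * real_of_int j)"

definition is_frame :: "real \<Rightarrow> nat \<Rightarrow> real vec set \<Rightarrow> (nat \<Rightarrow> real vec) \<Rightarrow> bool" where
  "is_frame t N L f \<longleftrightarrow> (\<forall>i<N. f i \<in> L)
     \<and> (\<forall>i<N. \<forall>j<N. f i \<bullet> f j = (if i = j then t else 0))"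

definition skew_weighing :: "nat \<Rightarrow> nat \<Rightarrow> int mat \<Rightarrow> bool" where
  "skew_weighing n m W \<longleftrightarrow> W \<in> carrier_mat n n
     \<and> (\<forall>i<n. \<forall>j<n. W $$ (i, j) \<in> {0, 1, -1})
     \<and> transpose_mat W = - W
     \<and> W * transpose_mat W = of_nat m \<cdot>\<^sub>m 1\<^sub>m n"

text \<open>Generator matrix (I | W + 2I) and the Z_4-code it generates (row span mod 4).\<close>
definition gen_C4 :: "nat \<Rightarrow> int mat \<Rightarrow> int mat" where
  "gen_C4 n W = four_block_mat (1\<^sub>m n) (W + 2 \<cdot>\<^sub>m 1\<^sub>m n) (0\<^sub>m 0 n) (0\<^sub>m 0 n)"

definition C4_tilde :: "nat \<Rightarrow> int mat \<Rightarrow> int vec set" where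
  "C4_tilde n W = {map_vec (\<lambda>t. t mod 4) (transpose_mat (gen_C4 n W) *\<^sub>v u)
                   | u. u \<in> carrier_vec n}"

definition F_tilde :: "nat \<Rightarrow> int mat \<Rightarrow> int \<Rightarrow> int \<Rightarrow> int \<Rightarrow> int \<Rightarrow> real mat" where
  "F_tilde n W a b c d = (1/2 :: real) \<cdot>\<^sub>m map_mat real_of_int
     (four_block_mat (a \<cdot>\<^sub>m 1\<^sub>m n + b \<cdot>\<^sub>m W) (c \<cdot>\<^sub>m 1\<^sub>m n + d \<cdot>\<^sub>m W)
                     ((- c) \<cdot>\<^sub>m 1\<^sub>m n + d \<cdot>\<^sub>m W) (a \<cdot>\<^sub>m 1\<^sub>m n - b \<cdot>\<^sub>m W))"

end

theory Submission
  imports Defs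
begin


lemma W_skew:
  assumes "skew_weighing n m W" "i<n" "j<n"
  shows "W$$(j,i) = - W$$(i,j)"
proof -
  have W: "W \<in> carrier_mat n n" using assms(1) unfolding skew_weighing_def by blast
  have "transpose_mat W = - W" using assms(1) unfolding skew_weighing_def by blast
  hence "transpose_mat W $$ (i,j) = (- W) $$ (i,j)" by simp
  thus ?thesis using W assms(2,3) by simp
qed

lemma W_rows:
  assumes "skew_weighing n m W" "i<n" "j<n"
  shows "(\<Sum>k<n. W$$(i,k) * W$$(j,k)) = (if i=j then int m else 0)"
proof -
  have W: "W \<in> carrier_mat n n" using assms(1) unfolding skew_weighing_def by blast
  have "W * transpose_mat W = of_nat m \<cdot>\<^sub>m 1\<^sub>m n" using assms(1) unfolding skew_weighing_def by blast
  hence "(W * transpose_mat W) $$ (i,j) = (of_nat m \<cdot>\<^sub>m 1\<^sub>m n) $$ (i,j)" by simp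
  moreover have "(W * transpose_mat W) $$ (i,j) = (\<Sum>k<n. W$$(i,k) * W$$(j,k))"
    using W assms(2,3) by (simp add: scalar_prod_def atLeast0LessThan)
  ultimately show ?thesis using assms(2,3) by simp
qed

lemma W_cols:
  assumes "skew_weighing n m W" "i<n" "j<n"
  shows "(\<Sum>k<n. W$$(k,i) * W$$(k,j)) = (if i=j then int m else 0)"
proof -
  have "(\<Sum>k<n. W$$(k,i) * W$$(k,j)) = (\<Sum>k<n. W$$(i,k) * W$$(j,k))"
  proof (rule sum.cong)
    fix k assume "k \<in> {..<n}"
    hence "W$$(k,i) = - W$$(i,k)" "W$$(k,j) = - W$$(j,k)"
      using W_skew[OF assms(1), of i k] W_skew[OF assms(1), of j k] assms by auto
    thus "W$$(k,i) * W$$(k,j) = W$$(i,k) * W$$(j,k)" by simp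
  qed simp
  thus ?thesis using W_rows[OF assms] by simp
qed

definition Mop :: "nat \<Rightarrow> int mat \<Rightarrow> (nat \<Rightarrow> int) \<Rightarrow> nat \<Rightarrow> int" where
  "Mop n W p j = 2 * p j + (\<Sum>i<n. W$$(i,j) * p i)"

lemma Mop_bilin:
  assumes "skew_weighing n m W"
  shows "(\<Sum>j<n. Mop n W p j * Mop n W q j) = (4 + int m) * (\<Sum>j<n. p j * q j)"
proof -
  define S where "S f j = (\<Sum>i<n. W$$(i,j) * f i)" for f j
  have e: "Mop n W f j = 2 * f j + S f j" for f j unfolding Mop_def S_def by simp
  have 1: "(\<Sum>j<n. S p j * S q j) = int m * (\<Sum>j<n. p j * q j)"
  proof -
    have "(\<Sum>j<n. S p j * S q j) = (\<Sum>j<n. \<Sum>i<n. \<Sum>k<n. W$$(i,j) * W$$(k,j) * (p i * q k))"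
      unfolding S_def sum_product by (intro sum.cong refl) (simp add: ac_simps)
    also have "\<dots> = (\<Sum>i<n. \<Sum>j<n. \<Sum>k<n. W$$(i,j) * W$$(k,j) * (p i * q k))"
      by (rule sum.swap)
    also have "\<dots> = (\<Sum>i<n. \<Sum>k<n. \<Sum>j<n. W$$(i,j) * W$$(k,j) * (p i * q k))"
      by (intro sum.cong refl sum.swap)
    also have "\<dots> = (\<Sum>i<n. \<Sum>k<n. (\<Sum>j<n. W$$(i,j) * W$$(k,j)) * (p i * q k))"
      by (simp add: sum_distrib_right)
    also have "\<dots> = (\<Sum>i<n. \<Sum>k<n. (if i = k then int m else 0) * (p i * q k))"
      by (intro sum.cong refl, simp add: W_rows[OF assms])
    also have "\<dots> = (\<Sum>i<n. \<Sum>k<n. (if i = k then int m * (p i * q k) else 0))"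
      by (intro sum.cong refl) simp
    also have "\<dots> = (\<Sum>i<n. int m * (p i * q i))"
      by simp
    finally show ?thesis by (simp add: sum_distrib_left)
  qed
  have 2: "(\<Sum>j<n. p j * S q j) + (\<Sum>j<n. q j * S p j) = 0"
  proof -
    have a: "(\<Sum>j<n. p j * S q j) = (\<Sum>j<n. \<Sum>k<n. p j * W$$(k,j) * q k)"
      unfolding S_def by (simp add: sum_distrib_left mult_ac)
    have "(\<Sum>j<n. q j * S p j) = (\<Sum>j<n. \<Sum>i<n. q j * W$$(i,j) * p i)"
      unfolding S_def by (simp add: sum_distrib_left mult_ac)
    also have "\<dots> = (\<Sum>i<n. \<Sum>j<n. q j * W$$(i,j) * p i)"
      by (rule sum.swap)
    also have "\<dots> = (\<Sum>i<n. \<Sum>j<n. - (p i * W$$(j,i) * q j))"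
    proof (intro sum.cong refl)
      fix i j assume "i \<in> {..<n}" "j \<in> {..<n}"
      hence "W$$(i,j) = - W$$(j,i)" using W_skew[OF assms, of j i] by simp
      thus "q j * W$$(i,j) * p i = - (p i * W$$(j,i) * q j)" by simp
    qed
    finally have b: "(\<Sum>j<n. q j * S p j) = - (\<Sum>j<n. \<Sum>k<n. p j * W$$(k,j) * q k)"
      by (simp only: sum_negf)
    show ?thesis using a b by simp
  qed
  have "(\<Sum>j<n. Mop n W p j * Mop n W q j)
     = (\<Sum>j<n. 4 * (p j * q j) + 2 * (p j * S q j) + 2 * (q j * S p j) + S p j * S q j)"
    unfolding e by (intro sum.cong refl) (simp add: ring_distribs)
  also have "\<dots> = (\<Sum>j<n. 4 * (p j * q j)) + (\<Sum>j<n. 2 * (p j * S q j)) + (\<Sum>j<n. 2 * (q j * S p j))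
      + (\<Sum>j<n. S p j * S q j)"
    by (simp only: sum.distrib)
  also have "\<dots> = 4 * (\<Sum>j<n. p j * q j) + 2 * (\<Sum>j<n. p j * S q j) + 2 * (\<Sum>j<n. q j * S p j)
      + (\<Sum>j<n. S p j * S q j)"
    by (simp only: sum_distrib_left)
  also have "\<dots> = (4 + int m) * (\<Sum>j<n. p j * q j)"
  proof -
    have "2 * (\<Sum>j<n. p j * S q j) + 2 * (\<Sum>j<n. q j * S p j) = 0" using 2 by simp
    thus ?thesis unfolding 1 by (simp add: distrib_right)
  qed
  finally show ?thesis .
qed

definition good :: "nat \<Rightarrow> int mat \<Rightarrow> int vec \<Rightarrow> bool" where
  "good n W y \<longleftrightarrow> dim_vec y = 2*n \<and> (\<forall>j<n. (4::int) dvd (y$(n+j) - Mop n W (\<lambda>i. y$i) j))"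

lemma Mop_cong:
  assumes "\<forall>i<n. (4::int) dvd (p i - q i)" "j < n"
  shows "4 dvd (Mop n W p j - Mop n W q j)"
proof -
  have "Mop n W p j - Mop n W q j = 2*(p j - q j) + (\<Sum>i<n. W$$(i,j)*(p i - q i))"
    by (simp add: Mop_def sum_subtractf right_diff_distrib)
  moreover have "4 dvd (\<Sum>i<n. W$$(i,j)*(p i - q i))"
    using assms(1) by (intro dvd_sum) auto
  moreover have "4 dvd 2*(p j - q j)"
  proof -
    have "4 dvd (p j - q j)" using assms by auto
    thus ?thesis by (rule dvd_mult)
  qed
  ultimately show ?thesis by simp
qed

lemma good_cong:
  assumes "good n W y" "dim_vec y' = 2*n" "\<forall>i<2*n. (4::int) dvd (y$i - y'$i)"
  shows "good n W y'"
  unfolding good_def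
proof (intro conjI allI impI)
  show "dim_vec y' = 2*n" by fact
  fix j assume j: "j < n"
  have a: "4 dvd (y$(n+j) - Mop n W (\<lambda>i. y$i) j)" using assms(1) j unfolding good_def by blast
  have b: "4 dvd (y$(n+j) - y'$(n+j))" using assms(3) j by auto
  have c: "4 dvd (Mop n W (\<lambda>i. y$i) j - Mop n W (\<lambda>i. y'$i) j)"
    using assms(3) j by (intro Mop_cong) auto
  have "y'$(n+j) - Mop n W (\<lambda>i. y'$i) j = (y$(n+j) - Mop n W (\<lambda>i. y$i) j) - (y$(n+j) - y'$(n+j))
     + (Mop n W (\<lambda>i. y$i) j - Mop n W (\<lambda>i. y'$i) j)" by simp
  thus "4 dvd (y'$(n+j) - Mop n W (\<lambda>i. y'$i) j)" using a b c by (metis dvd_add dvd_diff)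
qed

lemma sum_split2:
  "(\<Sum>i<2*(n::nat). f i) = (\<Sum>i<n. f i) + (\<Sum>i<n. f (n+i)::'a::comm_monoid_add)"
proof -
  have "(\<Sum>i<2*n. f i) = (\<Sum>i\<in>{0..<n}. f i) + (\<Sum>i\<in>{n..<n+n}. f i)"
    by (simp add: mult_2 sum.atLeastLessThan_concat lessThan_atLeast0)
  also have "(\<Sum>i\<in>{n..<n+n}. f i) = (\<Sum>i\<in>{0..<n}. f (n+i))"
    using sum.shift_bounds_nat_ivl[of f 0 n n] by (simp add: add.commute)
  finally show ?thesis by (simp add: lessThan_atLeast0)
qed

lemma dot_split:
  fixes y y' :: "'a::comm_semiring_1 vec"
  assumes "dim_vec y' = 2*n"
  shows "y \<bullet> y' = (\<Sum>j<n. y$j * y'$j) + (\<Sum>j<n. y$(n+j) * y'$(n+j))"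
  unfolding scalar_prod_def assms atLeast0LessThan by (rule sum_split2)

lemma dot_expand:
  assumes W: "skew_weighing n m W" and g: "good n W y" "good n W y'"
  defines "r \<equiv> \<lambda>j. (y$(n+j) - Mop n W (\<lambda>i. y$i) j) div 4"
    and "r' \<equiv> \<lambda>j. (y'$(n+j) - Mop n W (\<lambda>i. y'$i) j) div 4"
  shows "y \<bullet> y' = (5 + int m) * (\<Sum>j<n. y$j * y'$j)
     + 4 * (\<Sum>j<n. r j * Mop n W (\<lambda>i. y'$i) j + Mop n W (\<lambda>i. y$i) j * r' j + 4 * r j * r' j)"
proof -
  let ?P = "\<lambda>j. Mop n W (\<lambda>i. y$i) j" and ?Q = "\<lambda>j. Mop n W (\<lambda>i. y'$i) j"
  have ey: "y$(n+j) = ?P j + 4 * r j" if "j<n" for j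
    using g(1) that unfolding good_def r_def by auto
  have ey': "y'$(n+j) = ?Q j + 4 * r' j" if "j<n" for j
    using g(2) that unfolding good_def r'_def by auto
  have "(\<Sum>j<n. y$(n+j) * y'$(n+j)) = (\<Sum>j<n. ?P j * ?Q j + 4 * (r j * ?Q j + ?P j * r' j + 4 * r j * r' j))"
    by (intro sum.cong refl) (simp add: ey ey' ring_distribs)
  also have "\<dots> = (\<Sum>j<n. ?P j * ?Q j) + 4 * (\<Sum>j<n. r j * ?Q j + ?P j * r' j + 4 * r j * r' j)"
    by (simp add: sum.distrib sum_distrib_left)
  also have "(\<Sum>j<n. ?P j * ?Q j) = (4 + int m) * (\<Sum>j<n. y$j * y'$j)"
    by (rule Mop_bilin[OF W])
  finally have "(\<Sum>j<n. y$(n+j) * y'$(n+j)) = (4 + int m) * (\<Sum>j<n. y$j * y'$j) + 4 * (\<Sum>j<n. r j * ?Q j + ?P j * r' j + 4 * r j * r' j)" .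
  moreover have "y \<bullet> y' = (\<Sum>j<n. y$j * y'$j) + (\<Sum>j<n. y$(n+j) * y'$(n+j))"
    using g(2) unfolding good_def by (intro dot_split) auto
  ultimately show ?thesis by (simp add: algebra_simps)
qed

lemma good_dvd4:
  assumes W: "skew_weighing n m W" and m: "m mod 8 = 3" and g: "good n W y" "good n W y'"
  shows "4 dvd (y \<bullet> y')"
proof -
  have "(8::int) dvd (5 + int m)" using m by presburger
  hence "4 dvd (5 + int m)" by (rule dvd_trans[rotated]) simp
  thus ?thesis unfolding dot_expand[OF W g] by simp
qed

lemma good_dvd8:
  assumes W: "skew_weighing n m W" and m: "m mod 8 = 3" and g: "good n W y"
  shows "8 dvd (y \<bullet> y)"
proof -
  have 1: "(8::int) dvd (5 + int m)" using m by presburger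
  define r where "r \<equiv> \<lambda>j. (y$(n+j) - Mop n W (\<lambda>i. y$i) j) div 4"
  let ?P = "\<lambda>j. Mop n W (\<lambda>i. y$i) j"
  have "(\<Sum>j<n. r j * ?P j + ?P j * r j + 4 * r j * r j) = 2 * (\<Sum>j<n. r j * ?P j + 2 * r j * r j)"
    by (simp add: sum_distrib_left algebra_simps)
  hence "y \<bullet> y = (5 + int m) * (\<Sum>j<n. y$j * y$j) + 8 * (\<Sum>j<n. r j * ?P j + 2 * r j * r j)"
    unfolding dot_expand[OF W g g] r_def by simp
  thus ?thesis using 1 by simp
qed




lemma Mop_eq:
  assumes "\<forall>i<n. p i = q i" "j < n"
  shows "Mop n W p j = Mop n W q j"
proof -
  have "(\<Sum>i<n. W$$(i,j) * p i) = (\<Sum>i<n. W$$(i,j) * q i)"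
    using assms(1) by (intro sum.cong refl) auto
  thus ?thesis unfolding Mop_def using assms by simp
qed

lemma Mop_add: "Mop n W (\<lambda>i. p i + q i) j = Mop n W p j + Mop n W q j"
  by (simp add: Mop_def sum.distrib algebra_simps)

lemma Mop_smult: "Mop n W (\<lambda>i. r * p i) j = r * Mop n W p j"
  by (simp add: Mop_def sum_distrib_left algebra_simps)

lemma good_mod:
  assumes "good n W y" shows "good n W (map_vec (\<lambda>t. t mod 4) y)"
  by (rule good_cong[OF assms]) (use assms in \<open>auto simp: good_def mod_eq_dvd_iff[symmetric]\<close>)

lemma good_add:
  assumes "good n W x" "good n W y" shows "good n W (x + y)"
  unfolding good_def
proof (intro conjI allI impI)
  show "dim_vec (x + y) = 2*n" using assms by (simp add: good_def)
  fix j assume j: "j<n"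
  have "Mop n W (\<lambda>i. (x+y)$i) j = Mop n W (\<lambda>i. x$i + y$i) j"
    using assms j by (intro Mop_eq) (auto simp: good_def)
  also have "\<dots> = Mop n W (\<lambda>i. x$i) j + Mop n W (\<lambda>i. y$i) j" by (rule Mop_add)
  finally have e: "Mop n W (\<lambda>i. (x+y)$i) j = Mop n W (\<lambda>i. x$i) j + Mop n W (\<lambda>i. y$i) j" .
  have "(x+y)$(n+j) = x$(n+j) + y$(n+j)" using assms j by (simp add: good_def)
  moreover have "4 dvd (x$(n+j) - Mop n W (\<lambda>i. x$i) j)" "4 dvd (y$(n+j) - Mop n W (\<lambda>i. y$i) j)"
    using assms j by (auto simp: good_def)
  ultimately show "4 dvd ((x + y) $ (n + j) - Mop n W (\<lambda>i. (x + y) $ i) j)"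
    unfolding e by (metis (no_types, lifting) add_diff_add dvd_add)
qed

lemma good_smult:
  assumes "good n W x" shows "good n W (r \<cdot>\<^sub>v x)"
  unfolding good_def
proof (intro conjI allI impI)
  show "dim_vec (r \<cdot>\<^sub>v x) = 2*n" using assms by (simp add: good_def)
  fix j assume j: "j<n"
  have "Mop n W (\<lambda>i. (r \<cdot>\<^sub>v x)$i) j = Mop n W (\<lambda>i. r * x$i) j"
    using assms j by (intro Mop_eq) (auto simp: good_def)
  also have "\<dots> = r * Mop n W (\<lambda>i. x$i) j" by (rule Mop_smult)
  finally have e: "Mop n W (\<lambda>i. (r \<cdot>\<^sub>v x)$i) j = r * Mop n W (\<lambda>i. x$i) j" .
  have "(r \<cdot>\<^sub>v x)$(n+j) = r * x$(n+j)" using assms j by (simp add: good_def)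
  moreover have "4 dvd (x$(n+j) - Mop n W (\<lambda>i. x$i) j)"
    using assms j by (auto simp: good_def)
  ultimately show "4 dvd ((r \<cdot>\<^sub>v x) $ (n + j) - Mop n W (\<lambda>i. (r \<cdot>\<^sub>v x) $ i) j)"
    unfolding e by (metis dvd_mult right_diff_distrib)
qed

lemma genT:
  assumes W: "W \<in> carrier_mat n n" and u: "u \<in> carrier_vec n"
  shows "transpose_mat (gen_C4 n W) *\<^sub>v u = vec (2*n) (\<lambda>j. if j<n then u$j else Mop n W (\<lambda>i. u$i) (j-n))"
proof (rule eq_vecI)
  show "dim_vec (transpose_mat (gen_C4 n W) *\<^sub>v u) = dim_vec (vec (2*n) (\<lambda>j. if j<n then u$j else Mop n W (\<lambda>i. u$i) (j-n)))"
    using W by (simp add: gen_C4_def)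
  fix j assume "j < dim_vec (vec (2*n) (\<lambda>j. if j<n then u$j else Mop n W (\<lambda>i. u$i) (j-n)))"
  hence j: "j < 2*n" by simp
  have "(transpose_mat (gen_C4 n W) *\<^sub>v u) $ j = (\<Sum>i<n. gen_C4 n W $$ (i,j) * u$i)"
    using W u j by (simp add: gen_C4_def scalar_prod_def atLeast0LessThan)
  also have "\<dots> = (\<Sum>i<n. (if j < n then (if i = j then 1 else 0) else W$$(i,j-n) + 2 * (if i = j-n then 1 else 0)) * u$i)"
    using W j by (intro sum.cong refl) (auto simp: gen_C4_def)
  also have "\<dots> = (if j<n then u$j else Mop n W (\<lambda>i. u$i) (j-n))"
  proof (cases "j<n")
    case True
    have "(\<Sum>i<n. (if i = j then 1 else 0) * u$i) = (\<Sum>i<n. (if i = j then u$i else 0))"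
      by (intro sum.cong refl) auto
    thus ?thesis using True by simp
  next
    case False
    have "(\<Sum>i<n. (W$$(i,j-n) + 2 * (if i = j-n then 1 else 0)) * u$i)
       = (\<Sum>i<n. W$$(i,j-n) * u$i) + (\<Sum>i<n. (if i = j-n then 2 * u$i else 0))"
    proof -
      have "(\<Sum>i<n. (W$$(i,j-n) + 2 * (if i = j-n then 1 else 0)) * u$i)
         = (\<Sum>i<n. W$$(i,j-n) * u$i + (if i = j-n then 2 * u$i else 0))"
        by (intro sum.cong refl) (auto simp: ring_distribs)
      thus ?thesis by (simp only: sum.distrib)
    qed
    thus ?thesis using False j by (simp add: Mop_def)
  qed
  finally show "(transpose_mat (gen_C4 n W) *\<^sub>v u) $ j = vec (2*n) (\<lambda>j. if j<n then u$j else Mop n W (\<lambda>i. u$i) (j-n)) $ j"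
    using j by simp
qed




lemma Zk_iff: "x \<in> Zk_space k N \<longleftrightarrow> dim_vec x = N \<and> (\<forall>i<N. 0 \<le> x$i \<and> x$i < k)"
  unfolding Zk_space_def carrier_dim_vec by simp

lemma C_char:
  assumes W: "skew_weighing n m W"
  shows "C4_tilde n W = {x \<in> Zk_space 4 (2*n). good n W x}"
proof -
  have Wc: "W \<in> carrier_mat n n" using W unfolding skew_weighing_def by blast
  define f where "f u = vec (2*n) (\<lambda>j. if j<n then u$j else Mop n W (\<lambda>i. u$i) (j-n))" for u :: "int vec"
  have gf: "good n W (f u)" for u
    unfolding good_def f_def
  proof (intro conjI allI impI)
    fix j assume j: "j<n"
    have "Mop n W (\<lambda>i. vec (2*n) (\<lambda>j. if j<n then u$j else Mop n W (\<lambda>i. u$i) (j-n)) $ i) j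
        = Mop n W (\<lambda>i. u$i) j" using j by (intro Mop_eq) auto
    thus "4 dvd (vec (2*n) (\<lambda>j. if j<n then u$j else Mop n W (\<lambda>i. u$i) (j-n)) $ (n + j) -
          Mop n W (\<lambda>i. vec (2*n) (\<lambda>j. if j<n then u$j else Mop n W (\<lambda>i. u$i) (j-n)) $ i) j)"
      using j by simp
  qed simp
  show ?thesis
  proof (intro equalityI subsetI)
    fix x assume "x \<in> C4_tilde n W"
    then obtain u where u: "u \<in> carrier_vec n" and x0: "x = map_vec (\<lambda>t. t mod 4) (transpose_mat (gen_C4 n W) *\<^sub>v u)"
      unfolding C4_tilde_def by blast
    have x: "x = map_vec (\<lambda>t. t mod 4) (f u)" using x0 by (simp only: f_def genT[OF Wc u])
    have dfx: "dim_vec (f u) = 2*n" by (simp add: f_def)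
    have dx: "dim_vec x = 2*n" using dfx x by (metis index_map_vec(2))
    have "x \<in> carrier_vec (2*n)" using dx by (rule carrier_vecI)
    moreover have "\<forall>i<2*n. 0 \<le> x$i \<and> x$i < 4"
    proof (intro allI impI)
      fix i assume "i < 2*n"
      hence "x$i = (f u $ i) mod 4" using dfx x by (metis index_map_vec(1))
      thus "0 \<le> x$i \<and> x$i < 4" by simp
    qed
    ultimately have "x \<in> Zk_space 4 (2*n)" unfolding Zk_space_def by blast
    moreover have "good n W x" unfolding x by (rule good_mod[OF gf])
    ultimately show "x \<in> {x \<in> Zk_space 4 (2*n). good n W x}" by blast
  next
    fix x assume "x \<in> {x \<in> Zk_space 4 (2*n). good n W x}"
    hence xz: "x \<in> Zk_space 4 (2*n)" and g: "good n W x" by auto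
    define u where "u = vec n (\<lambda>i. x$i)"
    have u: "u \<in> carrier_vec n" unfolding u_def by simp
    have "map_vec (\<lambda>t. t mod 4) (f u) = x"
    proof (rule eq_vecI)
      show "dim_vec (map_vec (\<lambda>t. t mod 4) (f u)) = dim_vec x"
        using xz by (simp add: f_def Zk_iff)
      fix j assume "j < dim_vec x"
      hence j: "j < 2*n" using xz by (simp add: Zk_iff)
      have rng: "0 \<le> x$j" "x$j < 4" using xz j by (auto simp: Zk_iff)
      show "map_vec (\<lambda>t. t mod 4) (f u) $ j = x $ j"
      proof (cases "j<n")
        case True thus ?thesis using j rng by (simp add: f_def u_def)
      next
        case False
        define j' where "j' = j - n"
        have j': "j' < n" "j = n + j'" using False j unfolding j'_def by auto
        have "4 dvd (x$(n+j') - Mop n W (\<lambda>i. x$i) j')" using g j' unfolding good_def by blast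
        hence "Mop n W (\<lambda>i. x$i) j' mod 4 = x$(n+j') mod 4" by (simp add: mod_eq_dvd_iff dvd_diff_commute)
        moreover have "Mop n W (\<lambda>i. u$i) j' = Mop n W (\<lambda>i. x$i) j'"
          using j' by (intro Mop_eq) (auto simp: u_def)
        ultimately show ?thesis using j j' rng by (simp add: f_def)
      qed
    qed
    hence "x = map_vec (\<lambda>t. t mod 4) (transpose_mat (gen_C4 n W) *\<^sub>v u)"
      unfolding f_def genT[OF Wc u] by simp
    thus "x \<in> C4_tilde n W" unfolding C4_tilde_def using u by blast
  qed
qed

lemma code_ok:
  assumes W: "skew_weighing n m W"
  shows "is_Zk_code 4 (2*n) (C4_tilde n W)"
  unfolding is_Zk_code_def C_char[OF W]
proof (intro conjI ballI allI)
  show "{x \<in> Zk_space 4 (2 * n). good n W x} \<subseteq> Zk_space 4 (2 * n)" by blast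
  have "good n W (0\<^sub>v (2*n))" unfolding good_def by (simp add: Mop_def)
  thus "0\<^sub>v (2 * n) \<in> {x \<in> Zk_space 4 (2 * n). good n W x}" by (simp add: Zk_iff)
next
  fix x y assume x: "x \<in> {x \<in> Zk_space 4 (2 * n). good n W x}" and y: "y \<in> {x \<in> Zk_space 4 (2 * n). good n W x}"
  have "good n W (map_vec (\<lambda>t. t mod 4) (x + y))" using x y by (intro good_mod good_add) auto
  moreover have "map_vec (\<lambda>t. t mod 4) (x + y) \<in> Zk_space 4 (2*n)" using x y by (auto simp: Zk_iff)
  ultimately show "map_vec (\<lambda>t. t mod 4) (x + y) \<in> {x \<in> Zk_space 4 (2 * n). good n W x}" by blast
next
  fix x and r :: int assume x: "x \<in> {x \<in> Zk_space 4 (2 * n). good n W x}"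
  have e: "map_vec (\<lambda>t. (r * t) mod 4) x = map_vec (\<lambda>t. t mod 4) (r \<cdot>\<^sub>v x)" by (auto simp: smult_vec_def)
  have "good n W (map_vec (\<lambda>t. t mod 4) (r \<cdot>\<^sub>v x))" using x by (intro good_mod good_smult) auto
  moreover have "map_vec (\<lambda>t. t mod 4) (r \<cdot>\<^sub>v x) \<in> Zk_space 4 (2*n)" using x by (auto simp: Zk_iff)
  ultimately show "map_vec (\<lambda>t. (r * t) mod 4) x \<in> {x \<in> Zk_space 4 (2 * n). good n W x}" unfolding e by blast
qed




lemma dot_cong4:
  fixes x a b :: "int vec"
  assumes "dim_vec a = dim_vec b" "\<forall>i<dim_vec b. 4 dvd (a$i - b$i)"
  shows "4 dvd (x \<bullet> a - x \<bullet> b)"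
proof -
  have "x \<bullet> a - x \<bullet> b = (\<Sum>i\<in>{0..<dim_vec b}. x$i * (a$i - b$i))"
    unfolding scalar_prod_def assms(1) by (simp add: sum_subtractf right_diff_distrib)
  also have "4 dvd \<dots>" using assms(2) by (intro dvd_sum) auto
  finally show ?thesis .
qed

definition cwl :: "nat \<Rightarrow> int mat \<Rightarrow> nat \<Rightarrow> int vec" where
  "cwl n W l = vec (2*n) (\<lambda>j. if j<n then (if j=l then 1 else 0) else 2*(if j-n=l then 1 else 0) + W$$(l,j-n))"

lemma cwl_good:
  assumes "l < n" shows "good n W (cwl n W l)"
  unfolding good_def
proof (intro conjI allI impI)
  show "dim_vec (cwl n W l) = 2*n" by (simp add: cwl_def)
  fix j assume j: "j<n"
  have "Mop n W (\<lambda>i. cwl n W l $ i) j = Mop n W (\<lambda>i. if i=l then 1 else 0) j"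
    using j by (intro Mop_eq) (auto simp: cwl_def)
  also have "\<dots> = 2 * (if j=l then 1 else 0) + W$$(l,j)"
  proof -
    have "(\<Sum>i<n. W$$(i,j) * (if i=l then 1 else 0)) = (\<Sum>i<n. if i=l then W$$(i,j) else 0)"
      by (intro sum.cong refl) auto
    thus ?thesis using assms by (simp add: Mop_def)
  qed
  finally show "4 dvd (cwl n W l $ (n + j) - Mop n W (\<lambda>i. cwl n W l $ i) j)"
    using j by (simp add: cwl_def)
qed

lemma cwl_dot:
  assumes "dim_vec x = 2*n" "l < n"
  shows "x \<bullet> cwl n W l = x$l + 2*x$(n+l) + (\<Sum>j<n. W$$(l,j) * x$(n+j))"
proof -
  have "x \<bullet> cwl n W l = (\<Sum>j<n. x$j * cwl n W l $ j) + (\<Sum>j<n. x$(n+j) * cwl n W l $ (n+j))"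
    by (rule dot_split) (simp add: cwl_def)
  also have "(\<Sum>j<n. x$j * cwl n W l $ j) = (\<Sum>j<n. if j = l then x$j else 0)"
    by (intro sum.cong refl) (auto simp: cwl_def)
  also have "(\<Sum>j<n. x$(n+j) * cwl n W l $ (n+j)) = (\<Sum>j<n. (if j = l then 2*x$(n+j) else 0) + W$$(l,j) * x$(n+j))"
    by (intro sum.cong refl) (auto simp: cwl_def ring_distribs)
  finally show ?thesis using assms by (simp add: sum.distrib)
qed

lemma MopN:
  assumes W: "skew_weighing n m W" and j: "j < n"
  shows "Mop n W (\<lambda>l. - (2 * q l + (\<Sum>k<n. W$$(l,k) * q k))) j = - (4 + int m) * q j"
proof -
  have s1: "(\<Sum>i<n. W$$(i,j) * q i) = - (\<Sum>i<n. W$$(j,i) * q i)"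
  proof -
    have "(\<Sum>i<n. W$$(i,j) * q i) = (\<Sum>i<n. - (W$$(j,i) * q i))"
    proof (intro sum.cong refl)
      fix i assume "i \<in> {..<n}"
      hence "W$$(i,j) = - W$$(j,i)" using W_skew[OF W, of i j] j by simp
      thus "W$$(i,j) * q i = - (W$$(j,i) * q i)" by simp
    qed
    thus ?thesis by (simp add: sum_negf)
  qed
  have s2: "(\<Sum>i<n. W$$(i,j) * (\<Sum>k<n. W$$(i,k) * q k)) = int m * q j"
  proof -
    have "(\<Sum>i<n. W$$(i,j) * (\<Sum>k<n. W$$(i,k) * q k)) = (\<Sum>i<n. \<Sum>k<n. W$$(i,j) * W$$(i,k) * q k)"
      by (simp add: sum_distrib_left mult.assoc)
    also have "\<dots> = (\<Sum>k<n. \<Sum>i<n. W$$(i,j) * W$$(i,k) * q k)" by (rule sum.swap)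
    also have "\<dots> = (\<Sum>k<n. (\<Sum>i<n. W$$(i,j) * W$$(i,k)) * q k)" by (simp add: sum_distrib_right)
    also have "\<dots> = (\<Sum>k<n. if j = k then int m * q k else 0)"
      using j by (intro sum.cong refl) (simp add: W_cols[OF W])
    finally show ?thesis using j by simp
  qed
  have "Mop n W (\<lambda>l. - (2 * q l + (\<Sum>k<n. W$$(l,k) * q k))) j
     = - 2 * (2 * q j + (\<Sum>k<n. W$$(j,k) * q k)) - 2 * (\<Sum>i<n. W$$(i,j) * q i)
       - (\<Sum>i<n. W$$(i,j) * (\<Sum>k<n. W$$(i,k) * q k))"
    by (simp add: Mop_def sum.distrib sum_negf sum_subtractf ring_distribs sum_distrib_left mult.assoc mult.left_commute)
  also have "\<dots> = - (4 + int m) * q j" unfolding s1 s2 by (simp add: algebra_simps)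
  finally show ?thesis .
qed

lemma dual_core:
  assumes W: "skew_weighing n m W" and m: "m mod 8 = 3" and dx: "dim_vec x = 2*n"
    and h: "\<forall>l<n. 4 dvd (x \<bullet> cwl n W l)"
  shows "good n W x"
  unfolding good_def
proof (intro conjI allI impI)
  show "dim_vec x = 2*n" by fact
  fix j assume j: "j < n"
  define q where "q l = x$(n+l)" for l
  define N where "N l = 2 * q l + (\<Sum>k<n. W$$(l,k) * q k)" for l
  have "\<forall>l<n. 4 dvd (x$l - (- N l))"
  proof (intro allI impI)
    fix l assume l: "l<n"
    have "x \<bullet> cwl n W l = x$l + N l" using cwl_dot[OF dx l] by (simp add: N_def q_def)
    moreover have "4 dvd (x \<bullet> cwl n W l)" using h l by blast
    ultimately show "4 dvd (x$l - (- N l))" by simp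
  qed
  hence d0: "4 dvd (Mop n W (\<lambda>i. x$i) j - Mop n W (\<lambda>l. - N l) j)" using j by (intro Mop_cong) auto
  have e: "Mop n W (\<lambda>l. - N l) j = - (4 + int m) * q j" unfolding N_def by (rule MopN[OF W j])
  have eq: "Mop n W (\<lambda>i. x$i) j + (4 + int m) * q j = Mop n W (\<lambda>i. x$i) j - Mop n W (\<lambda>l. - N l) j"
    unfolding e by (simp add: algebra_simps)
  have a: "4 dvd (Mop n W (\<lambda>i. x$i) j + (4 + int m) * q j)" unfolding eq by (rule d0)
  have "(4::int) dvd (5 + int m)" using m by presburger
  hence b: "4 dvd ((5 + int m) * q j)" by (rule dvd_mult2)
  have "x$(n+j) - Mop n W (\<lambda>i. x$i) j = (5 + int m) * q j - (Mop n W (\<lambda>i. x$i) j + (4 + int m) * q j)"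
    by (simp add: q_def algebra_simps)
  thus "4 dvd (x$(n+j) - Mop n W (\<lambda>i. x$i) j)" using a b by (metis dvd_diff)
qed




lemma card_int_sum: "int (card {i. i < (N::nat) \<and> P i}) = (\<Sum>i<N. of_bool (P i))"
proof -
  have "{..<N} \<inter> {x. P x} = {i. i < N \<and> P i}" by auto
  moreover have "(\<Sum>i<N. of_bool (P i) :: int) = of_nat (card ({..<N} \<inter> {x. P x}))"
    by (rule sum_of_bool_eq) simp_all
  ultimately show ?thesis by simp
qed

lemma weight_eq:
  assumes "x \<in> Zk_space 4 N"
  shows "int (euclid_weight x) = x \<bullet> x - 8 * (\<Sum>i<N. of_bool (x$i = 3))"
proof -
  have dx: "dim_vec x = N" and r: "\<And>i. i < N \<Longrightarrow> 0 \<le> x$i \<and> x$i < 4" using assms by (auto simp: Zk_iff)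
  have "int (euclid_weight x) = (\<Sum>i<N. of_bool (x$i = 1 \<or> x$i = 3)) + 4 * (\<Sum>i<N. of_bool (x$i = 2))"
    unfolding euclid_weight_def dx by (simp add: card_int_sum)
  also have "\<dots> = (\<Sum>i<N. of_bool (x$i = 1 \<or> x$i = 3) + 4 * of_bool (x$i = 2))"
    by (simp add: sum.distrib sum_distrib_left)
  also have "\<dots> = (\<Sum>i<N. x$i * x$i - 8 * of_bool (x$i = 3))"
  proof (intro sum.cong refl)
    fix i assume "i \<in> {..<N}"
    hence "x$i = 0 \<or> x$i = 1 \<or> x$i = 2 \<or> x$i = 3" using r[of i] by auto
    thus "of_bool (x$i = 1 \<or> x$i = 3) + 4 * of_bool (x$i = 2) = x$i * x$i - 8 * (of_bool (x$i = 3) :: int)"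
      by auto
  qed
  also have "\<dots> = x \<bullet> x - 8 * (\<Sum>i<N. of_bool (x$i = 3))"
    unfolding scalar_prod_def dx by (simp add: sum_subtractf sum_distrib_left atLeast0LessThan)
  finally show ?thesis .
qed

lemma typeII:
  assumes W: "skew_weighing n m W" and m: "m mod 8 = 3"
  shows "type_II_Z4 (2*n) (C4_tilde n W)"
  unfolding type_II_Z4_def
proof (intro conjI ballI)
  show "is_Zk_code 4 (2 * n) (C4_tilde n W)" by (rule code_ok[OF W])
  show "C4_tilde n W = dual_code 4 (2 * n) (C4_tilde n W)"
  proof (intro equalityI subsetI)
    fix x assume x: "x \<in> C4_tilde n W"
    hence "x \<in> Zk_space 4 (2*n)" "good n W x" unfolding C_char[OF W] by auto
    moreover have "\<forall>y\<in>C4_tilde n W. (x \<bullet> y) mod 4 = 0"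
      using good_dvd4[OF W m \<open>good n W x\<close>] unfolding C_char[OF W] by auto
    ultimately show "x \<in> dual_code 4 (2 * n) (C4_tilde n W)" unfolding dual_code_def by blast
  next
    fix x assume "x \<in> dual_code 4 (2 * n) (C4_tilde n W)"
    hence xz: "x \<in> Zk_space 4 (2*n)" and h: "\<forall>y\<in>C4_tilde n W. (x \<bullet> y) mod 4 = 0"
      unfolding dual_code_def by auto
    have dx: "dim_vec x = 2*n" using xz by (simp add: Zk_iff)
    have "good n W x"
    proof (rule dual_core[OF W m dx], intro allI impI)
      fix l assume l: "l < n"
      define y where "y = map_vec (\<lambda>t. t mod 4) (cwl n W l)"
      have dc: "dim_vec (cwl n W l) = 2*n" by (simp add: cwl_def)
      have "good n W y" unfolding y_def by (rule good_mod[OF cwl_good[OF l]])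
      moreover have "y \<in> Zk_space 4 (2*n)" unfolding y_def Zk_iff using dc by simp
      ultimately have "y \<in> C4_tilde n W" unfolding C_char[OF W] by blast
      hence "4 dvd (x \<bullet> y)" using h by auto
      moreover have "4 dvd (x \<bullet> cwl n W l - x \<bullet> y)"
      proof (rule dot_cong4)
        show "dim_vec (cwl n W l) = dim_vec y" unfolding y_def by simp
        show "\<forall>i<dim_vec y. 4 dvd (cwl n W l $ i - y $ i)"
          unfolding y_def using dc by (auto simp: mod_eq_dvd_iff[symmetric])
      qed
      ultimately show "4 dvd (x \<bullet> cwl n W l)" by (metis dvd_add diff_add_cancel)
    qed
    thus "x \<in> C4_tilde n W" unfolding C_char[OF W] using xz by blast
  qed
next
  fix x assume x: "x \<in> C4_tilde n W"
  hence xz: "x \<in> Zk_space 4 (2*n)" and g: "good n W x" unfolding C_char[OF W] by auto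
  have "8 dvd (x \<bullet> x)" by (rule good_dvd8[OF W m g])
  hence "8 dvd int (euclid_weight x)" unfolding weight_eq[OF xz] by simp
  thus "8 dvd euclid_weight x" by presburger
qed




lemma good_zero: "good n W (0\<^sub>v (2*n))" unfolding good_def by (simp add: Mop_def)

lemma sqrt4: "sqrt (real_of_int 4) = 2"
  using real_sqrt_abs[of 2] by simp

lemma L_char:
  assumes W: "skew_weighing n m W"
  shows "constrA 4 (2*n) (C4_tilde n W) = {(1/2) \<cdot>\<^sub>v map_vec real_of_int y | y. good n W y}"
proof (intro equalityI subsetI)
  fix v assume "v \<in> constrA 4 (2*n) (C4_tilde n W)"
  then obtain c z where v: "v = (1/2) \<cdot>\<^sub>v map_vec real_of_int (c + 4 \<cdot>\<^sub>v z)"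
    and c: "c \<in> C4_tilde n W" and z: "z \<in> carrier_vec (2*n)"
    unfolding constrA_def sqrt4 by blast
  have gc: "good n W c" using c unfolding C_char[OF W] by auto
  have dc: "dim_vec c = 2*n" using gc by (simp add: good_def)
  have dz: "dim_vec z = 2*n" using carrier_vecD[OF z] .
  have "good n W (c + 4 \<cdot>\<^sub>v z)"
    by (rule good_cong[OF gc]) (use dc dz in auto)
  thus "v \<in> {(1/2) \<cdot>\<^sub>v map_vec real_of_int y | y. good n W y}" using v by blast
next
  fix v assume "v \<in> {(1/2) \<cdot>\<^sub>v map_vec real_of_int y | y. good n W y}"
  then obtain y where v: "v = (1/2) \<cdot>\<^sub>v map_vec real_of_int y" and g: "good n W y" by auto
  have dy: "dim_vec y = 2*n" using g by (simp add: good_def)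
  define c where "c = map_vec (\<lambda>t. t mod 4) y"
  define z where "z = map_vec (\<lambda>t. t div 4) y"
  have yc: "y = c + 4 \<cdot>\<^sub>v z" by (rule eq_vecI) (auto simp: c_def z_def)
  moreover have "c \<in> C4_tilde n W" unfolding C_char[OF W]
    using good_mod[OF g] dy by (auto simp: c_def Zk_iff)
  moreover have "z \<in> carrier_vec (2*n)" by (rule carrier_vecI) (simp add: z_def dy)
  ultimately have "(1 / sqrt (real_of_int 4)) \<cdot>\<^sub>v map_vec real_of_int (c + 4 \<cdot>\<^sub>v z) \<in> constrA 4 (2*n) (C4_tilde n W)"
    unfolding constrA_def by blast
  thus "v \<in> constrA 4 (2*n) (C4_tilde n W)" unfolding v yc[symmetric] sqrt4 by simp
qed

lemma dot_half:
  fixes y y' :: "int vec"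
  assumes "dim_vec y = dim_vec y'"
  shows "((1/2) \<cdot>\<^sub>v map_vec real_of_int y) \<bullet> ((1/2) \<cdot>\<^sub>v map_vec real_of_int y') = real_of_int (y \<bullet> y') / 4"
proof -
  have "((1/2) \<cdot>\<^sub>v map_vec real_of_int y) \<bullet> ((1/2) \<cdot>\<^sub>v map_vec real_of_int y')
      = (\<Sum>i\<in>{0..<dim_vec y'}. real_of_int (y$i * y'$i) / 4)"
    unfolding scalar_prod_def using assms by (intro sum.cong) auto
  also have "\<dots> = real_of_int (y \<bullet> y') / 4"
    unfolding scalar_prod_def by (simp add: sum_divide_distrib)
  finally show ?thesis .
qed

lemma int_div4: "real_of_int k / 4 \<in> \<int> \<longleftrightarrow> (4::int) dvd k"
proof
  assume "real_of_int k / 4 \<in> \<int>"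
  then obtain j where "real_of_int k / 4 = real_of_int j" by (auto elim: Ints_cases)
  hence "real_of_int k = real_of_int (4 * j)" by simp
  hence "k = 4 * j" by (simp only: of_int_eq_iff)
  thus "4 dvd k" by simp
next
  assume "4 dvd k"
  then obtain j where "k = 4 * j" by auto
  thus "real_of_int k / 4 \<in> \<int>" by simp
qed

lemma unimod:
  assumes W: "skew_weighing n m W" and m: "m mod 8 = 3"
  shows "even_unimodular (2*n) (constrA 4 (2*n) (C4_tilde n W))"
  unfolding even_unimodular_def L_char[OF W]
proof (intro conjI ballI)
  let ?L = "{(1/2) \<cdot>\<^sub>v map_vec real_of_int y | y. good n W y}"
  show "?L = dual_lattice (2*n) ?L"
  proof (intro equalityI subsetI)
    fix v assume "v \<in> ?L"
    then obtain y where v: "v = (1/2) \<cdot>\<^sub>v map_vec real_of_int y" and g: "good n W y" by auto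
    have dy: "dim_vec y = 2*n" using g by (simp add: good_def)
    have "v \<in> carrier_vec (2*n)" by (rule carrier_vecI) (simp add: dy v)
    moreover have "\<forall>x\<in>?L. v \<bullet> x \<in> \<int>"
    proof
      fix x assume "x \<in> ?L"
      then obtain y' where x: "x = (1/2) \<cdot>\<^sub>v map_vec real_of_int y'" and g': "good n W y'" by auto
      have "dim_vec y = dim_vec y'" using g g' by (simp add: good_def)
      hence eq: "v \<bullet> x = real_of_int (y \<bullet> y') / 4" unfolding v x by (rule dot_half)
      show "v \<bullet> x \<in> \<int>" unfolding eq by (rule int_div4[THEN iffD2, OF good_dvd4[OF W m g g']])
    qed
    ultimately show "v \<in> dual_lattice (2*n) ?L" unfolding dual_lattice_def by blast
  next
    fix v assume "v \<in> dual_lattice (2*n) ?L"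
    hence vc: "v \<in> carrier_vec (2*n)" and h: "\<forall>x\<in>?L. v \<bullet> x \<in> \<int>" unfolding dual_lattice_def by auto
    have dv: "dim_vec v = 2*n" using carrier_vecD[OF vc] .
    have two: "2 * v$i \<in> \<int>" if i: "i < 2*n" for i
    proof -
      define e where "e = vec (2*n) (\<lambda>k. if k = i then (4::int) else 0)"
      have "good n W e"
        by (rule good_cong[OF good_zero]) (auto simp: e_def)
      hence "(1/2) \<cdot>\<^sub>v map_vec real_of_int e \<in> ?L" by blast
      hence "v \<bullet> ((1/2) \<cdot>\<^sub>v map_vec real_of_int e) \<in> \<int>" using h by blast
      moreover have "v \<bullet> ((1/2) \<cdot>\<^sub>v map_vec real_of_int e) = 2 * v$i"
      proof -
        have "v \<bullet> ((1/2) \<cdot>\<^sub>v map_vec real_of_int e) = (\<Sum>k\<in>{0..<2*n}. if k = i then 2 * v$i else 0)"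
          unfolding scalar_prod_def by (intro sum.cong) (auto simp: e_def)
        thus ?thesis using i by simp
      qed
      ultimately show ?thesis by simp
    qed
    define w where "w = vec (2*n) (\<lambda>i. \<lfloor>2 * v$i\<rfloor>)"
    have wv: "real_of_int (w$i) = 2 * v$i" if "i < 2*n" for i
      using two[OF that] unfolding w_def using that by (auto elim: Ints_cases)
    have dw: "dim_vec w = 2*n" by (simp add: w_def)
    have v: "v = (1/2) \<cdot>\<^sub>v map_vec real_of_int w"
      by (rule eq_vecI) (auto simp: dv dw wv)
    have "good n W w"
    proof (rule dual_core[OF W m dw], intro allI impI)
      fix l assume l: "l < n"
      have "(1/2) \<cdot>\<^sub>v map_vec real_of_int (cwl n W l) \<in> ?L" using cwl_good[OF l] by blast
      hence "v \<bullet> ((1/2) \<cdot>\<^sub>v map_vec real_of_int (cwl n W l)) \<in> \<int>" using h by blast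
      moreover have "dim_vec w = dim_vec (cwl n W l)" by (simp add: w_def cwl_def)
      moreover have "v \<bullet> ((1/2) \<cdot>\<^sub>v map_vec real_of_int (cwl n W l)) = real_of_int (w \<bullet> cwl n W l) / 4"
        unfolding v by (rule dot_half) (simp add: w_def cwl_def)
      ultimately have "real_of_int (w \<bullet> cwl n W l) / 4 \<in> \<int>" by simp
      thus "4 dvd (w \<bullet> cwl n W l)" using int_div4 by blast
    qed
    thus "v \<in> ?L" unfolding v by blast
  qed
next
  fix v assume "v \<in> {(1/2) \<cdot>\<^sub>v map_vec real_of_int y | y. good n W y}"
  then obtain y where v: "v = (1/2) \<cdot>\<^sub>v map_vec real_of_int y" and g: "good n W y" by auto
  have "v \<bullet> v = real_of_int (y \<bullet> y) / 4" unfolding v by (rule dot_half) simp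
  moreover obtain j where "y \<bullet> y = 8 * j" using good_dvd8[OF W m g] by auto
  ultimately have "v \<bullet> v = 2 * real_of_int j" by simp
  thus "\<exists>j::int. v \<bullet> v = 2 * real_of_int j" by blast
qed




definition blk :: "int mat \<Rightarrow> int \<Rightarrow> int \<Rightarrow> nat \<Rightarrow> nat \<Rightarrow> int" where
  "blk W \<alpha> \<beta> i k = \<alpha> * (if i = k then 1 else 0) + \<beta> * W$$(i,k)"

definition rv :: "nat \<Rightarrow> int mat \<Rightarrow> int \<Rightarrow> int \<Rightarrow> int \<Rightarrow> int \<Rightarrow> nat \<Rightarrow> int vec" where
  "rv n W \<alpha> \<beta> \<gamma> \<delta> i = vec (2*n) (\<lambda>k. if k < n then blk W \<alpha> \<beta> i k else blk W \<gamma> \<delta> i (k-n))"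

lemma blk_dot:
  assumes W: "skew_weighing n m W" and i: "i < n" and j: "j < n"
  shows "(\<Sum>k<n. blk W \<alpha> \<beta> i k * blk W \<alpha>' \<beta>' j k)
     = (\<alpha>*\<alpha>' + int m * \<beta>*\<beta>') * (if i = j then 1 else 0) + (\<beta>*\<alpha>' - \<alpha>*\<beta>') * W$$(i,j)"
proof -
  have "(\<Sum>k<n. blk W \<alpha> \<beta> i k * blk W \<alpha>' \<beta>' j k)
      = (\<Sum>k<n. (if k = i then \<alpha>*\<alpha>'*(if i = j then 1 else 0) + \<alpha>*\<beta>'*W$$(j,i) else 0)
             + (if k = j then \<beta>*\<alpha>'*W$$(i,j) else 0) + \<beta>*\<beta>' * (W$$(i,k) * W$$(j,k)))"
    by (intro sum.cong refl) (auto simp: blk_def algebra_simps)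
  also have "\<dots> = \<alpha>*\<alpha>'*(if i = j then 1 else 0) + \<alpha>*\<beta>'*W$$(j,i) + \<beta>*\<alpha>'*W$$(i,j)
      + \<beta>*\<beta>' * (\<Sum>k<n. W$$(i,k) * W$$(j,k))"
    using i j by (simp add: sum.distrib sum_distrib_left)
  also have "\<dots> = (\<alpha>*\<alpha>' + int m * \<beta>*\<beta>') * (if i = j then 1 else 0) + (\<beta>*\<alpha>' - \<alpha>*\<beta>') * W$$(i,j)"
    unfolding W_rows[OF W i j] W_skew[OF W j i] by (simp add: algebra_simps)
  finally show ?thesis .
qed

lemma rv_dot:
  assumes W: "skew_weighing n m W" and i: "i < n" and j: "j < n"
  shows "rv n W \<alpha> \<beta> \<gamma> \<delta> i \<bullet> rv n W \<alpha>' \<beta>' \<gamma>' \<delta>' j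
     = (\<alpha>*\<alpha>' + \<gamma>*\<gamma>' + int m * (\<beta>*\<beta>' + \<delta>*\<delta>')) * (if i = j then 1 else 0)
       + (\<beta>*\<alpha>' - \<alpha>*\<beta>' + \<delta>*\<gamma>' - \<gamma>*\<delta>') * W$$(i,j)"
proof -
  have "rv n W \<alpha> \<beta> \<gamma> \<delta> i \<bullet> rv n W \<alpha>' \<beta>' \<gamma>' \<delta>' j
     = (\<Sum>k<n. rv n W \<alpha> \<beta> \<gamma> \<delta> i $ k * rv n W \<alpha>' \<beta>' \<gamma>' \<delta>' j $ k)
       + (\<Sum>k<n. rv n W \<alpha> \<beta> \<gamma> \<delta> i $ (n+k) * rv n W \<alpha>' \<beta>' \<gamma>' \<delta>' j $ (n+k))"
    by (rule dot_split) (simp add: rv_def)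
  also have "(\<Sum>k<n. rv n W \<alpha> \<beta> \<gamma> \<delta> i $ k * rv n W \<alpha>' \<beta>' \<gamma>' \<delta>' j $ k)
      = (\<Sum>k<n. blk W \<alpha> \<beta> i k * blk W \<alpha>' \<beta>' j k)"
    by (intro sum.cong refl) (simp add: rv_def)
  also have "(\<Sum>k<n. rv n W \<alpha> \<beta> \<gamma> \<delta> i $ (n+k) * rv n W \<alpha>' \<beta>' \<gamma>' \<delta>' j $ (n+k))
      = (\<Sum>k<n. blk W \<gamma> \<delta> i k * blk W \<gamma>' \<delta>' j k)"
    by (intro sum.cong refl) (simp add: rv_def)
  finally show ?thesis unfolding blk_dot[OF W i j] by (simp add: algebra_simps)
qed

lemma rv_good:
  assumes W: "skew_weighing n m W" and i: "i < n"
    and h1: "4 dvd (\<gamma> - (2*\<alpha> - int m * \<beta>))" and h2: "4 dvd (\<delta> - (\<alpha> + 2*\<beta>))"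
  shows "good n W (rv n W \<alpha> \<beta> \<gamma> \<delta> i)"
  unfolding good_def
proof (intro conjI allI impI)
  show "dim_vec (rv n W \<alpha> \<beta> \<gamma> \<delta> i) = 2*n" by (simp add: rv_def)
  fix j assume j: "j < n"
  have "Mop n W (\<lambda>k. rv n W \<alpha> \<beta> \<gamma> \<delta> i $ k) j = Mop n W (blk W \<alpha> \<beta> i) j"
    using j by (intro Mop_eq) (auto simp: rv_def)
  also have "\<dots> = (2*\<alpha> - int m * \<beta>) * (if i = j then 1 else 0) + (\<alpha> + 2*\<beta>) * W$$(i,j)"
  proof -
    have s: "(\<Sum>k<n. W$$(k,j) * blk W \<alpha> \<beta> i k) = \<alpha> * W$$(i,j) + \<beta> * (\<Sum>k<n. W$$(i,k) * W$$(k,j))"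
    proof -
      have "(\<Sum>k<n. W$$(k,j) * blk W \<alpha> \<beta> i k) = (\<Sum>k<n. (if k = i then \<alpha> * W$$(i,j) else 0) + \<beta> * (W$$(i,k) * W$$(k,j)))"
        by (intro sum.cong refl) (auto simp: blk_def algebra_simps)
      thus ?thesis using i by (simp add: sum.distrib sum_distrib_left)
    qed
    have "(\<Sum>k<n. W$$(i,k) * W$$(k,j)) = (\<Sum>k<n. - (W$$(i,k) * W$$(j,k)))"
    proof (intro sum.cong refl)
      fix k assume "k \<in> {..<n}"
      hence "W$$(k,j) = - W$$(j,k)" using W_skew[OF W, of j k] j by simp
      thus "W$$(i,k) * W$$(k,j) = - (W$$(i,k) * W$$(j,k))" by simp
    qed
    also have "\<dots> = - (if i = j then int m else 0)" using W_rows[OF W i j] by (simp add: sum_negf)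
    finally have s2: "(\<Sum>k<n. W$$(i,k) * W$$(k,j)) = - (if i = j then int m else 0)" .
    show ?thesis unfolding Mop_def s s2 by (simp add: blk_def algebra_simps)
  qed
  finally have e: "Mop n W (\<lambda>k. rv n W \<alpha> \<beta> \<gamma> \<delta> i $ k) j
     = (2*\<alpha> - int m * \<beta>) * (if i = j then 1 else 0) + (\<alpha> + 2*\<beta>) * W$$(i,j)" .
  have "rv n W \<alpha> \<beta> \<gamma> \<delta> i $ (n+j) - Mop n W (\<lambda>k. rv n W \<alpha> \<beta> \<gamma> \<delta> i $ k) j
      = (\<gamma> - (2*\<alpha> - int m * \<beta>)) * (if i = j then 1 else 0) + (\<delta> - (\<alpha> + 2*\<beta>)) * W$$(i,j)"
    unfolding e using j by (simp add: rv_def blk_def algebra_simps)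
  also have "4 dvd \<dots>" using h1 h2 by (intro dvd_add dvd_mult2)
  finally show "4 dvd (rv n W \<alpha> \<beta> \<gamma> \<delta> i $ (n+j) - Mop n W (\<lambda>k. rv n W \<alpha> \<beta> \<gamma> \<delta> i $ k) j)" .
qed




lemma rowF:
  assumes Wc: "W \<in> carrier_mat n n" and i: "i < 2*n"
  shows "row (F_tilde n W a b c d) i = (1/2) \<cdot>\<^sub>v map_vec real_of_int
           (if i < n then rv n W a b c d i else rv n W (-c) d a (-b) (i-n))"
proof -
  have dr: "dim_row W = n" "dim_col W = n" using Wc by auto
  define B where "B = four_block_mat (a \<cdot>\<^sub>m 1\<^sub>m n + b \<cdot>\<^sub>m W) (c \<cdot>\<^sub>m 1\<^sub>m n + d \<cdot>\<^sub>m W)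
                     ((- c) \<cdot>\<^sub>m 1\<^sub>m n + d \<cdot>\<^sub>m W) (a \<cdot>\<^sub>m 1\<^sub>m n - b \<cdot>\<^sub>m W)"
  have F: "F_tilde n W a b c d = (1/2 :: real) \<cdot>\<^sub>m map_mat real_of_int B" unfolding F_tilde_def B_def ..
  have dB: "dim_row B = 2*n" "dim_col B = 2*n" unfolding B_def by (simp_all add: dr)
  have Bij: "B $$ (i,k) = (if i < n then rv n W a b c d i else rv n W (-c) d a (-b) (i-n)) $ k" if k: "k < 2*n" for k
  proof -
    have "B $$ (i,k) = (if i < n then if k < n then a * (if i = k then 1 else 0) + b * W$$(i,k)
                                       else c * (if i = k - n then 1 else 0) + d * W$$(i,k-n)
                        else if k < n then (-c) * (if i - n = k then 1 else 0) + d * W$$(i-n,k)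
                                       else a * (if i - n = k - n then 1 else 0) - b * W$$(i-n,k-n))"
      unfolding B_def using i k by (simp add: dr)
    also have "\<dots> = (if i < n then rv n W a b c d i else rv n W (-c) d a (-b) (i-n)) $ k"
      using k by (simp add: rv_def blk_def)
    finally show ?thesis .
  qed
  show ?thesis
  proof (rule eq_vecI)
    show "dim_vec (row (F_tilde n W a b c d) i) = dim_vec ((1/2) \<cdot>\<^sub>v map_vec real_of_int
           (if i < n then rv n W a b c d i else rv n W (-c) d a (-b) (i-n)))"
      unfolding F by (simp add: dB rv_def)
    fix k assume "k < dim_vec ((1/2) \<cdot>\<^sub>v map_vec real_of_int
           (if i < n then rv n W a b c d i else rv n W (-c) d a (-b) (i-n)))"
    hence k: "k < 2*n" by (simp add: rv_def)
    have "row (F_tilde n W a b c d) i $ k = 1/2 * real_of_int (B $$ (i,k))"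
      unfolding F using i k dB by simp
    also have "\<dots> = ((1/2) \<cdot>\<^sub>v map_vec real_of_int
           (if i < n then rv n W a b c d i else rv n W (-c) d a (-b) (i-n))) $ k"
      unfolding Bij[OF k] using k by (simp add: rv_def)
    finally show "row (F_tilde n W a b c d) i $ k = ((1/2) \<cdot>\<^sub>v map_vec real_of_int
           (if i < n then rv n W a b c d i else rv n W (-c) d a (-b) (i-n))) $ k" .
  qed
qed

lemma congs:
  fixes a b c d :: int
  assumes m: "m mod 8 = 3" and hc: "c mod 4 = (2 * a + b) mod 4" and hd: "d mod 4 = (a + 2 * b) mod 4"
  shows "4 dvd (c - (2*a - int m * b))" "4 dvd (d - (a + 2*b))"
    "4 dvd (a - (2*(-c) - int m * d))" "4 dvd (-b - (-c + 2*d))"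
proof -
  have "4 dvd (c - (2*a + b))" using hc by (simp add: mod_eq_dvd_iff)
  then obtain k0 where k0: "c - (2*a + b) = 4*k0" by (elim dvdE)
  obtain k where k: "c = 2*a + b + 4*k" using k0 by (intro that[of k0]) simp
  have "4 dvd (d - (a + 2*b))" using hd by (simp add: mod_eq_dvd_iff)
  then obtain l0 where l0: "d - (a + 2*b) = 4*l0" by (elim dvdE)
  obtain l where l: "d = a + 2*b + 4*l" using l0 by (intro that[of l0]) simp
  define t where "t = int (m div 8)"
  have M: "int m = 8*t + 3" unfolding t_def using m by presburger
  show "4 dvd (c - (2*a - int m * b))"
    unfolding dvd_def by (rule exI[of _ "k + (2*t+1)*b"]) (simp add: k M algebra_simps)
  show "4 dvd (d - (a + 2*b))"
    unfolding dvd_def by (rule exI[of _ "l"]) (simp add: l algebra_simps)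
  show "4 dvd (a - (2*(-c) - int m * d))"
    unfolding dvd_def by (rule exI[of _ "(2*t+2)*a + (4*t+2)*b + 2*k + (8*t+3)*l"]) (simp add: k l M algebra_simps)
  show "4 dvd (-b - (-c + 2*d))"
    unfolding dvd_def by (rule exI[of _ "-b + k - 2*l"]) (simp add: k l algebra_simps)
qed

lemma frame_part:
  assumes W: "skew_weighing n m W" and m: "m mod 8 = 3"
    and hc: "c mod 4 = (2 * a + b) mod 4" and hd: "d mod 4 = (a + 2 * b) mod 4"
  shows "is_frame ((real_of_int (a^2) + real m * real_of_int (b^2) + real_of_int (c^2)
                 + real m * real_of_int (d^2)) / 4)
               (2 * n) (constrA 4 (2 * n) (C4_tilde n W)) (\<lambda>i. row (F_tilde n W a b c d) i)"
proof -
  have Wc: "W \<in> carrier_mat n n" using W unfolding skew_weighing_def by blast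
  define R where "R i = (if i < n then rv n W a b c d i else rv n W (-c) d a (-b) (i-n))" for i
  have rowR: "row (F_tilde n W a b c d) i = (1/2) \<cdot>\<^sub>v map_vec real_of_int (R i)" if "i < 2*n" for i
    unfolding R_def by (rule rowF[OF Wc that])
  note cg = congs[OF m hc hd]
  have gR: "good n W (R i)" if i: "i < 2*n" for i
  proof (cases "i < n")
    case True thus ?thesis unfolding R_def using rv_good[OF W True cg(1) cg(2)] by simp
  next
    case False
    hence "i - n < n" using i by simp
    thus ?thesis unfolding R_def using rv_good[OF W _ cg(3) cg(4)] False by simp
  qed
  have dR: "dim_vec (R i) = 2*n" for i unfolding R_def by (simp add: rv_def)
  define s where "s = a*a + c*c + int m * (b*b + d*d)"
  have RR: "R i \<bullet> R j = (if i = j then s else 0)" if i: "i < 2*n" and j: "j < 2*n" for i j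
  proof (cases "i < n")
    case True note ti = True
    show ?thesis
    proof (cases "j < n")
      case True
      show ?thesis unfolding R_def using ti True
        by (cases "i = j") (simp_all add: rv_dot[OF W] s_def algebra_simps)
    next
      case False
      have j': "j - n < n" using j False by simp
      have "i \<noteq> j" using ti False by auto
      thus ?thesis unfolding R_def using ti False by (simp add: rv_dot[OF W ti j'] algebra_simps)
    qed
  next
    case False note fi = False
    have i': "i - n < n" using i False by simp
    show ?thesis
    proof (cases "j < n")
      case True
      have "i \<noteq> j" using fi True by auto
      thus ?thesis unfolding R_def using fi True by (simp add: rv_dot[OF W i' True] algebra_simps)
    next
      case False
      have j': "j - n < n" using j False by simp
      have "(i - n = j - n) = (i = j)" using fi False by auto
      thus ?thesis unfolding R_def using fi False i' j'
        by (cases "i = j") (simp_all add: rv_dot[OF W] s_def algebra_simps)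
    qed
  qed
  show ?thesis
    unfolding is_frame_def L_char[OF W]
  proof (intro conjI allI impI)
    fix i assume i: "i < 2*n"
    show "row (F_tilde n W a b c d) i \<in> {(1/2) \<cdot>\<^sub>v map_vec real_of_int y | y. good n W y}"
      unfolding rowR[OF i] using gR[OF i] by blast
  next
    fix i j assume i: "i < 2*n" and j: "j < 2*n"
    have "row (F_tilde n W a b c d) i \<bullet> row (F_tilde n W a b c d) j = real_of_int (R i \<bullet> R j) / 4"
      unfolding rowR[OF i] rowR[OF j] by (rule dot_half) (simp add: dR)
    also have "\<dots> = (if i = j then (real_of_int (a^2) + real m * real_of_int (b^2) + real_of_int (c^2)
                 + real m * real_of_int (d^2)) / 4 else 0)"
      unfolding RR[OF i j] by (simp add: s_def power2_eq_square algebra_simps)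
    finally show "row (F_tilde n W a b c d) i \<bullet> row (F_tilde n W a b c d) j = (if i = j then (real_of_int (a^2) + real m * real_of_int (b^2) + real_of_int (c^2)
                 + real m * real_of_int (d^2)) / 4 else 0)" .
  qed
qed

theorem proposition3p3:
  fixes n m :: nat and W :: "int mat" and a b c d :: int
  assumes "skew_weighing n m W"
    and "n mod 4 = 0" and "m mod 8 = 3"
    and "c mod 4 = (2 * a + b) mod 4" and "d mod 4 = (a + 2 * b) mod 4"
  shows "type_II_Z4 (2 * n) (C4_tilde n W)
    \<and> even_unimodular (2 * n) (constrA 4 (2 * n) (C4_tilde n W))
    \<and> is_frame ((real_of_int (a^2) + real m * real_of_int (b^2) + real_of_int (c^2)
                 + real m * real_of_int (d^2)) / 4)
               (2 * n) (constrA 4 (2 * n) (C4_tilde n W)) (\<lambda>i. row (F_tilde n W a b c d) i)"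
  using typeII[OF assms(1,3)] unimod[OF assms(1,3)] frame_part[OF assms(1,3,4,5)] by blast


end
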